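(* Let $T$ be an $L_1$-periodic tiling of type $(\gamma_1,\gamma_2,\gamma_3)$ with $\gamma_1,\gamma_2,\gamma_3>0$. Then there is no infinite path in $T$. Equivalently, the cut quiver on $L_0/L_1$ (the quiver with vertices $L_0/L_1$ and the arrows in $T$) is acyclic.
   Context: Let $u^\top=(1,0)$, $v^\top=-(\tfrac12,\tfrac{\sqrt3}{2})$, $w=-(u+v)$, $L_0=\langle u,v\rangle$, and $L_1\le L_0$ a full-rank sublattice with $n=|L_0/L_1|$. An $L_1$-periodic tiling is an $L_1$-invariant map $T\colon L_0\to\{U,V,W\}$ such that for every $x$ exactly one of $T(x)=W$, $T(x+u)=V$, $T(x-v)=U$ holds; $T(x)$ removes one arrow of the upward triangle $x\to x+u\to x-v\to x$ ($U$: $x\to x+u$; $V$: $x-v\to x$; $W$: $x+u\to x-v$), and an arrow $x\to x+\alpha$ ($\alpha\in\{u,v,w\}$) is in $T$ if not removed; a path is in $T$ if all its arrows are. The type of $T$ is $(\#\tilde T^{-1}(U),\#\tilde T^{-1}(V),\#\tilde T^{-1}(W))$ for the induced map $\tilde T$ on $L_0/L_1$. *)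

theory Defs
  imports Main "HOL-Library.Product_Plus"
begin

text \<open>Coordinates: a point a*u + b*v of L0 = <u,v> is encoded as (a,b) :: int \<times> int.
  Hence u = (1,0), v = (0,1), w = -(u+v) = (-1,-1).\<close>

type_synonym pt = "int \<times> int"

definition u_vec :: pt where "u_vec = (1, 0)"
definition v_vec :: pt where "v_vec = (0, 1)"
definition w_vec :: pt where "w_vec = - (u_vec + v_vec)"

datatype tile = U | V | W

definition full_rank_sublattice :: "pt set \<Rightarrow> bool" where
  "full_rank_sublattice L \<longleftrightarrow>
     0 \<in> L \<and> (\<forall>x\<in>L. \<forall>y\<in>L. x + y \<in> L) \<and> (\<forall>x\<in>L. - x \<in> L) \<and>
     (\<exists>a\<in>L. \<exists>b\<in>L. fst a * snd b - snd a * fst b \<noteq> 0)"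

definition periodic_tiling :: "pt set \<Rightarrow> (pt \<Rightarrow> tile) \<Rightarrow> bool" where
  "periodic_tiling L T \<longleftrightarrow>
     (\<forall>x. \<forall>l\<in>L. T (x + l) = T x) \<and>
     (\<forall>x. (T x = W \<and> T (x + u_vec) \<noteq> V \<and> T (x - v_vec) \<noteq> U) \<or>
          (T x \<noteq> W \<and> T (x + u_vec) = V \<and> T (x - v_vec) \<noteq> U) \<or>
          (T x \<noteq> W \<and> T (x + u_vec) \<noteq> V \<and> T (x - v_vec) = U))"

definition coset :: "pt set \<Rightarrow> pt \<Rightarrow> pt set" where
  "coset L x = (\<lambda>l. x + l) ` L"

definition tile_count :: "pt set \<Rightarrow> (pt \<Rightarrow> tile) \<Rightarrow> tile \<Rightarrow> nat" where
  "tile_count L T t = card (coset L ` {x. T x = t})"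

definition tiling_type :: "pt set \<Rightarrow> (pt \<Rightarrow> tile) \<Rightarrow> nat \<times> nat \<times> nat" where
  "tiling_type L T = (tile_count L T U, tile_count L T V, tile_count L T W)"

text \<open>Arrow x\<rightarrow>x+u lies in the triangle at x (removed by U);
  arrow x\<rightarrow>x+v is the arrow (z-v)\<rightarrow>z of the triangle at z = x+v (removed by V);
  arrow x\<rightarrow>x+w is the arrow (z+u)\<rightarrow>(z-v) of the triangle at z = x-u (removed by W).\<close>
definition arrow_in :: "(pt \<Rightarrow> tile) \<Rightarrow> pt \<Rightarrow> pt \<Rightarrow> bool" where
  "arrow_in T x y \<longleftrightarrow>
     (y = x + u_vec \<and> T x \<noteq> U) \<or>
     (y = x + v_vec \<and> T (x + v_vec) \<noteq> V) \<or>
     (y = x + w_vec \<and> T (x - u_vec) \<noteq> W)"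

definition infinite_path_in :: "(pt \<Rightarrow> tile) \<Rightarrow> (nat \<Rightarrow> pt) \<Rightarrow> bool" where
  "infinite_path_in T p \<longleftrightarrow> (\<forall>k. arrow_in T (p k) (p (Suc k)))"

end

theory Submission
  imports Defs
begin

definition ssum :: "(int \<Rightarrow> int) \<Rightarrow> int \<Rightarrow> int" where
  "ssum f a = (if a \<ge> 0 then sum f {0..<a} else - sum f {a..<0})"

lemma ssum_step: "ssum f (a + 1) = ssum f a + f a"
proof (cases "a \<ge> 0")
  case True
  have "{0..<a+1} = insert a {0..<a}" using True by auto
  then show ?thesis using True by (simp add: ssum_def)
next
  case False
  show ?thesis
  proof (cases "a = -1")
    case True
    have "{-1..<0::int} = {-1}" by auto
    then show ?thesis using True by (simp add: ssum_def)
  next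
    case F2: False
    have "{a..<0} = insert a {a+1..<0}" using False by auto
    then show ?thesis using False F2 by (simp add: ssum_def)
  qed
qed

lemma int_const: fixes f :: "int \<Rightarrow> 'a" assumes "\<And>b. f (b + 1) = f b" shows "f b = f 0"
proof (induction b rule: int_induct[where k=0])
  case base then show ?case by simp
next
  case (step1 i) then show ?case using assms[of i] by simp
next
  case (step2 i) then show ?case using assms[of "i - 1"] by simp
qed

definition Fv :: "(pt \<Rightarrow> tile) \<Rightarrow> tile \<Rightarrow> pt \<Rightarrow> int" where
  "Fv T t x = (if T x = t then -2 else 1)"
definition Eu where "Eu T x = Fv T U x"
definition Ev where "Ev T x = Fv T V (x + v_vec)"
definition Ew where "Ew T x = Fv T W (x - u_vec)"

definition hh :: "(pt \<Rightarrow> tile) \<Rightarrow> pt \<Rightarrow> int" where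
  "hh T x = ssum (\<lambda>i. Eu T (i, 0)) (fst x) + ssum (\<lambda>j. Ev T (fst x, j)) (snd x)"

lemma up_tri: "Eu T z + Ev T (z - v_vec) + Ew T (z + u_vec) = 0"
  by (cases "T z") (simp_all add: Eu_def Ev_def Ew_def Fv_def)

lemma down_tri:
  assumes "periodic_tiling L T"
  shows "Ew T (x + u_vec) + Ev T (x + u_vec - v_vec) + Eu T (x - v_vec) = 0"
proof -
  have "(T x = W \<and> T (x + u_vec) \<noteq> V \<and> T (x - v_vec) \<noteq> U) \<or>
          (T x \<noteq> W \<and> T (x + u_vec) = V \<and> T (x - v_vec) \<noteq> U) \<or>
          (T x \<noteq> W \<and> T (x + u_vec) \<noteq> V \<and> T (x - v_vec) = U)"
    using assms unfolding periodic_tiling_def by blast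
  then show ?thesis by (auto simp: Eu_def Ev_def Ew_def Fv_def)
qed

lemma T1:
  assumes "periodic_tiling L T"
  shows "Ev T x + Eu T (x + v_vec) = Eu T x + Ev T (x + u_vec)"
  using up_tri[of T "x + v_vec"] down_tri[OF assms, of "x + v_vec"]
  by (simp add: algebra_simps)

lemma hh_v: "hh T (x + v_vec) = hh T x + Ev T x"
  by (cases x) (simp add: hh_def v_vec_def ssum_step)

lemma hh_u:
  assumes "periodic_tiling L T"
  shows "hh T (x + u_vec) = hh T x + Eu T x"
proof (cases x)
  case (Pair a b)
  define Qf where "Qf b = ssum (\<lambda>j. Ev T (a+1, j)) b - ssum (\<lambda>j. Ev T (a, j)) b - (Eu T (a,b) - Eu T (a,0))" for b
  have "Qf (b+1) = Qf b" for b
    using T1[OF assms, of "(a,b)"] by (simp add: Qf_def ssum_step u_vec_def v_vec_def)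
  then have "Qf b = Qf 0" by (rule int_const)
  then have "Qf b = 0" by (simp add: Qf_def ssum_def)
  then show ?thesis using Pair by (simp add: Qf_def hh_def u_vec_def ssum_step)
qed

lemma hh_w:
  assumes "periodic_tiling L T"
  shows "hh T (x + w_vec) = hh T x + Ew T x"
proof -
  have 1: "hh T x = hh T (x - u_vec - v_vec) + Eu T (x - u_vec - v_vec) + Ev T (x - v_vec)"
    using hh_u[OF assms, of "x - u_vec - v_vec"] hh_v[of T "x - v_vec"]
    by (simp add: algebra_simps)
  have 2: "Ew T x + Ev T (x - v_vec) + Eu T (x - u_vec - v_vec) = 0"
    using down_tri[OF assms, of "x - u_vec"] by (simp add: algebra_simps)
  have eq: "x + w_vec = x - u_vec - v_vec" by (simp add: w_vec_def algebra_simps)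
  show ?thesis unfolding eq using 1 2 by linarith
qed


locale til =
  fixes L :: "pt set" and T :: "pt \<Rightarrow> tile"
  assumes sub: "full_rank_sublattice L" and per: "periodic_tiling L T"
begin

lemma L0: "0 \<in> L" using sub by (simp add: full_rank_sublattice_def)
lemma Ladd: "x \<in> L \<Longrightarrow> y \<in> L \<Longrightarrow> x + y \<in> L" using sub by (simp add: full_rank_sublattice_def)
lemma Lneg: "x \<in> L \<Longrightarrow> - x \<in> L" using sub by (simp add: full_rank_sublattice_def)
lemma Lsub: "x \<in> L \<Longrightarrow> y \<in> L \<Longrightarrow> x - y \<in> L"
  using Ladd[OF _ Lneg] by (metis diff_conv_add_uminus)

lemma Tper: "l \<in> L \<Longrightarrow> T (x + l) = T x" using per unfolding periodic_tiling_def by blast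

lemma coset_eq_iff: "coset L x = coset L y \<longleftrightarrow> y - x \<in> L"
proof
  assume "coset L x = coset L y"
  moreover have "y \<in> coset L y" using L0 unfolding coset_def by (metis add.right_neutral image_eqI)
  ultimately have "y \<in> coset L x" by simp
  then obtain l where "l \<in> L" "y = x + l" unfolding coset_def by blast
  then show "y - x \<in> L" by simp
next
  assume d: "y - x \<in> L"
  show "coset L x = coset L y"
  proof
    show "coset L x \<subseteq> coset L y"
    proof
      fix z assume "z \<in> coset L x"
      then obtain l where l: "l \<in> L" "z = x + l" unfolding coset_def by auto
      then have "z = y + (l - (y - x))" by simp
      moreover have "l - (y - x) \<in> L" using Lsub l d by blast
      ultimately show "z \<in> coset L y" unfolding coset_def by blast
    qed
  next
    show "coset L y \<subseteq> coset L x"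
    proof
      fix z assume "z \<in> coset L y"
      then obtain l where l: "l \<in> L" "z = y + l" unfolding coset_def by auto
      then have "z = x + (l + (y - x))" by simp
      moreover have "l + (y - x) \<in> L" using Ladd l d by blast
      ultimately show "z \<in> coset L x" unfolding coset_def by blast
    qed
  qed
qed

definition rep :: "pt set \<Rightarrow> pt" where "rep c = (SOME x. coset L x = c)"

lemma rep_coset: "coset L (rep (coset L y)) = coset L y"
  unfolding rep_def by (rule someI) (rule refl)

lemma rep_diff: "rep (coset L y) - y \<in> L"
  using rep_coset[of y] coset_eq_iff by metis

definition perf :: "(pt \<Rightarrow> 'a) \<Rightarrow> bool" where
  "perf f \<longleftrightarrow> (\<forall>x. \<forall>l\<in>L. f (x + l) = f x)"

lemma perf_rep: "perf f \<Longrightarrow> f (rep (coset L y)) = f y"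
proof -
  assume "perf f"
  have "rep (coset L y) = y + (rep (coset L y) - y)" by simp
  then show ?thesis using \<open>perf f\<close> rep_diff unfolding perf_def by metis
qed

definition Q where "Q = range (coset L)"

lemma sum_shift:
  assumes "perf f"
  shows "(\<Sum>c\<in>Q. f (rep c + d)) = (\<Sum>c\<in>Q. (f (rep c) :: int))"
proof (rule sum.reindex_bij_witness[where j = "\<lambda>c. coset L (rep c + d)" and i = "\<lambda>c. coset L (rep c - d)"])
  fix a assume "a \<in> Q"
  then obtain y where a: "a = coset L y" unfolding Q_def by auto
  have "rep a - (rep (coset L (rep a + d)) - d) = - (rep (coset L (rep a + d)) - (rep a + d))"
    by simp
  then have "rep a - (rep (coset L (rep a + d)) - d) \<in> L" using rep_diff Lneg by metis
  then have "coset L (rep (coset L (rep a + d)) - d) = coset L (rep a)" using coset_eq_iff by blast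
  then show "coset L (rep (coset L (rep a + d)) - d) = a" using a rep_coset by simp
  show "coset L (rep a + d) \<in> Q" unfolding Q_def by simp
  show "f (rep (coset L (rep a + d))) = f (rep a + d)" using perf_rep[OF assms] .
next
  fix b assume "b \<in> Q"
  then obtain y where a: "b = coset L y" unfolding Q_def by auto
  have "rep b - (rep (coset L (rep b - d)) + d) = - (rep (coset L (rep b - d)) - (rep b - d))"
    by simp
  then have "rep b - (rep (coset L (rep b - d)) + d) \<in> L" using rep_diff Lneg by metis
  then have "coset L (rep (coset L (rep b - d)) + d) = coset L (rep b)" using coset_eq_iff by blast
  then show "coset L (rep (coset L (rep b - d)) + d) = b" using a rep_coset by simp
  show "coset L (rep b - d) \<in> Q" unfolding Q_def by simp
qed

lemma perf_T: "perf T" using Tper unfolding perf_def by blast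
lemma perf_Fv: "perf (Fv T t)" using Tper unfolding perf_def Fv_def by simp
lemma perf_shift: "perf f \<Longrightarrow> perf (\<lambda>x. f (x + d))"
  unfolding perf_def by (metis add.assoc add.commute)

lemma perf_hdiff: assumes "l \<in> L" shows "hh T (x + l) - hh T x = hh T (y + l) - hh T y"
proof -
  define G where "G x = hh T (x + l) - hh T x" for x
  have pE: "Eu T (x + l) = Eu T x" "Ev T (x + l) = Ev T x" "Ew T (x + l) = Ew T x" for x
    using perf_Fv assms unfolding perf_def Eu_def Ev_def Ew_def
    by (metis add.assoc add.commute, metis add.assoc add.commute, metis add_diff_eq diff_add_eq)
  have Gu: "G (x + u_vec) = G x" for x
    using hh_u[OF per, of "x + l"] hh_u[OF per, of x] pE(1)[of x]
    by (simp add: G_def algebra_simps)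
  have Gv: "G (x + v_vec) = G x" for x
    using hh_v[of T "x + l"] hh_v[of T x] pE(2)[of x]
    by (simp add: G_def algebra_simps)
  have a: "G (a, b) = G (0, b)" for a b
  proof -
    have "(\<lambda>a. G (a, b)) a = (\<lambda>a. G (a, b)) 0"
      by (rule int_const) (use Gu[of "(_, b)"] in \<open>simp add: u_vec_def\<close>)
    then show ?thesis by simp
  qed
  have b: "G (0, b) = G (0, 0)" for b
  proof -
    have "(\<lambda>b. G (0, b)) b = (\<lambda>b. G (0, b)) 0"
      by (rule int_const) (use Gv[of "(0, _)"] in \<open>simp add: v_vec_def\<close>)
    then show ?thesis by simp
  qed
  have "G x = G y" using a b by (metis prod.collapse)
  then show ?thesis by (simp add: G_def)
qed


lemma finQ:
  assumes pos: "\<And>t. tile_count L T t > 0"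
  shows "finite Q"
proof -
  have f: "finite (coset L ` {x. T x = t})" for t
    using pos[of t] unfolding tile_count_def by (meson card_gt_0_iff)
  have "Q \<subseteq> coset L ` {x. T x = U} \<union> coset L ` {x. T x = V} \<union> coset L ` {x. T x = W}"
    unfolding Q_def by (auto intro: tile.exhaust)
  then show ?thesis using f by (meson finite_UnI finite_subset)
qed

lemma S_le:
  assumes pos: "tile_count L T t > 0" and fin: "finite Q"
  shows "(\<Sum>c\<in>Q. Fv T t (rep c)) \<le> int (card Q) - 3"
proof -
  obtain x where x: "T x = t"
    using pos unfolding tile_count_def by (metis (mono_tags, lifting) card.empty empty_Collect_eq image_empty less_irrefl)
  define c0 where "c0 = coset L x"
  have c0: "c0 \<in> Q" unfolding Q_def c0_def by simp
  have v0: "Fv T t (rep c0) = -2" using perf_rep[OF perf_T, of x] x unfolding c0_def Fv_def by simp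
  have "(\<Sum>c\<in>Q. Fv T t (rep c)) = Fv T t (rep c0) + (\<Sum>c\<in>Q - {c0}. Fv T t (rep c))"
    using sum.remove[OF fin c0] .
  also have "(\<Sum>c\<in>Q - {c0}. Fv T t (rep c)) \<le> of_nat (card (Q - {c0})) * 1"
    by (rule sum_bounded_above) (simp add: Fv_def)
  also have "card (Q - {c0}) = card Q - 1" using c0 fin by simp
  finally have "(\<Sum>c\<in>Q. Fv T t (rep c)) \<le> -2 + int (card Q - 1)" using v0 by simp
  moreover have "card Q \<ge> 1" using c0 fin by (metis card_0_eq empty_iff less_one not_le)
  ultimately show ?thesis by (simp add: of_nat_diff)
qed

definition AA :: "pt \<Rightarrow> int" where
  "AA d = (\<Sum>c\<in>Q. hh T (rep c + d) - hh T (rep c))"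

lemma AA_step:
  assumes pos: "\<And>t. tile_count L T t > 0" and arr: "arrow_in T x y"
  shows "AA (y - z) \<le> AA (x - z) + int (card Q) - 3 \<and> hh T y = hh T x + 1"
proof -
  have fin: "finite Q" using finQ[OF pos] .
  let ?d = "x - z"
  have sh: "(\<Sum>c\<in>Q. Fv T t (rep c + e)) = (\<Sum>c\<in>Q. Fv T t (rep c))" for t e
    using sum_shift[OF perf_Fv] .
  consider (u) "y = x + u_vec" "T x \<noteq> U" | (v) "y = x + v_vec" "T (x + v_vec) \<noteq> V"
    | (w) "y = x + w_vec" "T (x - u_vec) \<noteq> W"
    using arr unfolding arrow_in_def by blast
  then show ?thesis
  proof cases
    case u
    have yd: "y - z = ?d + u_vec" using u by simp
    have "AA (y - z) = AA ?d + (\<Sum>c\<in>Q. Eu T (rep c + ?d))"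
    proof -
      have pt: "hh T (rep c + (?d + u_vec)) - hh T (rep c) = (hh T (rep c + ?d) - hh T (rep c)) + Eu T (rep c + ?d)" for c
        using hh_u[OF per, of "rep c + ?d"] by (simp add: add.assoc)
      show ?thesis unfolding yd AA_def sum.distrib[symmetric] by (intro sum.cong refl pt)
    qed
    also have "(\<Sum>c\<in>Q. Eu T (rep c + ?d)) = (\<Sum>c\<in>Q. Fv T U (rep c))"
      unfolding Eu_def by (rule sh)
    finally show ?thesis using S_le[OF pos fin, of U] hh_u[OF per, of x] u
      by (simp add: Eu_def Fv_def)
  next
    case v
    have yd: "y - z = ?d + v_vec" using v by simp
    have "AA (y - z) = AA ?d + (\<Sum>c\<in>Q. Ev T (rep c + ?d))"
    proof -
      have pt: "hh T (rep c + (?d + v_vec)) - hh T (rep c) = (hh T (rep c + ?d) - hh T (rep c)) + Ev T (rep c + ?d)" for c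
        using hh_v[of T "rep c + ?d"] by (simp add: add.assoc)
      show ?thesis unfolding yd AA_def sum.distrib[symmetric] by (intro sum.cong refl pt)
    qed
    also have "(\<Sum>c\<in>Q. Ev T (rep c + ?d)) = (\<Sum>c\<in>Q. Fv T V (rep c + (?d + v_vec)))"
      unfolding Ev_def by (simp add: add.assoc)
    also have "\<dots> = (\<Sum>c\<in>Q. Fv T V (rep c))" by (rule sh)
    finally show ?thesis using S_le[OF pos fin, of V] hh_v[of T x] v
      by (simp add: Ev_def Fv_def)
  next
    case w
    have yd: "y - z = ?d + w_vec" using w by simp
    have "AA (y - z) = AA ?d + (\<Sum>c\<in>Q. Ew T (rep c + ?d))"
    proof -
      have pt: "hh T (rep c + (?d + w_vec)) - hh T (rep c) = (hh T (rep c + ?d) - hh T (rep c)) + Ew T (rep c + ?d)" for c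
        using hh_w[OF per, of "rep c + ?d"] by (simp add: add.assoc)
      show ?thesis unfolding yd AA_def sum.distrib[symmetric] by (intro sum.cong refl pt)
    qed
    also have "(\<Sum>c\<in>Q. Ew T (rep c + ?d)) = (\<Sum>c\<in>Q. Fv T W (rep c + (?d - u_vec)))"
      unfolding Ew_def by (simp add: add_diff_eq)
    also have "\<dots> = (\<Sum>c\<in>Q. Fv T W (rep c))" by (rule sh)
    finally show ?thesis using S_le[OF pos fin, of W] hh_w[OF per, of x] w
      by (simp add: Ew_def Fv_def)
  qed
qed

lemma no_path:
  assumes pos: "\<And>t. tile_count L T t > 0"
  shows "\<not> infinite_path_in T p"
proof
  assume ip: "infinite_path_in T p"
  have fin: "finite Q" using finQ[OF pos] .
  define n where "n = int (card Q)"
  have walk: "AA (p (i + m) - p i) \<le> (n - 3) * int m \<and> hh T (p (i + m)) = hh T (p i) + int m" for i m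
  proof (induction m)
    case 0 then show ?case by (simp add: AA_def)
  next
    case (Suc m)
    have "arrow_in T (p (i + m)) (p (Suc (i + m)))" using ip unfolding infinite_path_in_def by blast
    from AA_step[OF pos this, of "p i"] Suc show ?case by (simp add: n_def algebra_simps)
  qed
  have "\<not> inj (\<lambda>k. coset L (p k))"
  proof
    assume "inj (\<lambda>k. coset L (p k))"
    moreover have "finite (range (\<lambda>k. coset L (p k)))"
      using fin by (rule finite_subset[rotated]) (auto simp: Q_def)
    ultimately have "finite (UNIV :: nat set)" using finite_imageD by blast
    then show False by simp
  qed
  then obtain a b where ab: "a \<noteq> b" "coset L (p a) = coset L (p b)" unfolding inj_def by blast
  then obtain i m where im: "m > 0" "coset L (p i) = coset L (p (i + m))"
    by (metis less_imp_add_positive nat_neq_iff zero_less_iff_neq_zero)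
  define l where "l = p (i + m) - p i"
  have lL: "l \<in> L" using im coset_eq_iff l_def by blast
  have "AA l = (\<Sum>c\<in>Q. hh T (p i + l) - hh T (p i))"
    unfolding AA_def using perf_hdiff[OF lL] by (intro sum.cong) auto
  also have "\<dots> = n * int m" using walk[of i m] by (simp add: l_def n_def)
  finally have "n * int m \<le> (n - 3) * int m" using walk[of i m] l_def by simp
  then show False using im(1) by (simp add: algebra_simps)
qed

end

theorem lemma6p40:
  fixes L1 :: "pt set" and T :: "pt \<Rightarrow> tile" and \<gamma>1 \<gamma>2 \<gamma>3 :: nat
  assumes "full_rank_sublattice L1"
    and "periodic_tiling L1 T"
    and "tiling_type L1 T = (\<gamma>1, \<gamma>2, \<gamma>3)"
    and "\<gamma>1 > 0" and "\<gamma>2 > 0" and "\<gamma>3 > 0"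
  shows "\<not> (\<exists>p. infinite_path_in T p)"
proof -
  interpret til L1 T using assms(1,2) by unfold_locales
  have pos: "tile_count L1 T t > 0" for t
    using assms(3-6) unfolding tiling_type_def by (cases t) auto
  show ?thesis using no_path[OF pos] by blast
qed

end
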